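(* Let $\alpha_1,\alpha_2,\alpha_3,\epsilon_1,\epsilon_2,\epsilon_3,f_1,f_2,f_3$ be real parameters and consider the system on $\mathbb{R}^3$ \[ \frac{dq_i}{dt} = q_i\Big(f_i + \sum_{j=1}^3 \beta_{ij} q_j\Big),\qquad i=1,2,3, \qquad \beta = -\begin{bmatrix}\epsilon_1 & \alpha_1 & \alpha_1\\ \alpha_2 & \epsilon_2 & \alpha_2\\ \alpha_3 & \alpha_3 & \epsilon_3\end{bmatrix}. \] If this system has a non-constant first integral that is analytic at the origin $q=0$, then $f_1,f_2,f_3$ are linearly dependent over the non-negative integers, i.e. there exist $n_1,n_2,n_3\in\mathbb{Z}_{\ge 0}$, not all zero, with $n_1f_1+n_2f_2+n_3f_3=0$.
   Context: A first integral is a function $I(q_1,q_2,q_3)$ that is constant along all solutions of the system. This system is the three-firm Cournot oligopoly with gradient adjustment, after rescaling time by the demand slope $b$, with $f_i=\frac{\alpha_i}{b}(a-d_i)$ and $\epsilon_i=\frac{2\alpha_i}{b}(b+e_i)$, where $\alpha_i$ are adjustment speeds, $a$ the demand intercept and $d_i,e_i$ the linear and quadratic cost coefficients. *)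

theory Defs
  imports "HOL-Analysis.Analysis"
begin

definition beta :: "real^3 \<Rightarrow> real^3 \<Rightarrow> 3 \<Rightarrow> 3 \<Rightarrow> real" where
  "beta \<alpha> \<epsilon> i j = - (if i = j then \<epsilon> $ i else \<alpha> $ i)"

definition cournot_field :: "real^3 \<Rightarrow> real^3 \<Rightarrow> real^3 \<Rightarrow> real^3 \<Rightarrow> real^3" where
  "cournot_field \<alpha> \<epsilon> f q = (\<chi> i. q $ i * (f $ i + (\<Sum>j\<in>UNIV. beta \<alpha> \<epsilon> i j * q $ j)))"

definition analytic_on_ball0 :: "(real^3 \<Rightarrow> real) \<Rightarrow> real \<Rightarrow> bool" where
  "analytic_on_ball0 I r \<longleftrightarrow> (\<exists>c :: nat \<Rightarrow> nat \<Rightarrow> nat \<Rightarrow> real.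
     \<forall>q \<in> ball 0 r.
       ((\<lambda>(n1, n2, n3). c n1 n2 n3 * (q $ 1) ^ n1 * (q $ 2) ^ n2 * (q $ 3) ^ n3)
          has_sum I q) (UNIV :: (nat \<times> nat \<times> nat) set))"

definition first_integral_on :: "(real^3 \<Rightarrow> real^3) \<Rightarrow> (real^3 \<Rightarrow> real) \<Rightarrow> (real^3) set \<Rightarrow> bool" where
  "first_integral_on F I U \<longleftrightarrow>
     (\<forall>(x :: real \<Rightarrow> real^3) (T :: real set).
        is_interval T \<longrightarrow>
        (\<forall>t\<in>T. x t \<in> U \<and> (x has_vector_derivative F (x t)) (at t within T)) \<longrightarrow>
        (\<forall>s\<in>T. \<forall>t\<in>T. I (x s) = I (x t)))"

end

theory Submission
  imports Defs
begin


lemma picard: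
  fixes F :: "real^3 \<Rightarrow> real^3" and y :: "real \<Rightarrow> real^3"
  assumes h: "0 < h" and d: "0 \<le> \<delta>"
    and yc: "continuous_on {0..h} y"
    and Fc: "continuous_on UNIV F"
    and L: "0 \<le> L" "h * L < 1"
    and lip: "\<And>a b t t'. t\<in>{0..h} \<Longrightarrow> norm (a - y t) \<le> \<delta> \<Longrightarrow> t'\<in>{0..h} \<Longrightarrow> norm (b - y t') \<le> \<delta>
                 \<Longrightarrow> norm (F a - F b) \<le> L * norm (a - b)"
    and tube: "\<And>z t. continuous_on {0..h} z \<Longrightarrow> (\<forall>t\<in>{0..h}. norm (z t - y t) \<le> \<delta>) \<Longrightarrow> t\<in>{0..h}
                 \<Longrightarrow> norm (x0 + integral {0..t} (\<lambda>u. F (z u)) - y t) \<le> \<delta>"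
  shows "\<exists>x. x 0 = x0 \<and> (\<forall>t\<in>{0..h}. (x has_vector_derivative F (x t)) (at t within {0..h})
                 \<and> norm (x t - y t) \<le> \<delta>)"
proof -
  define c where "c t = max 0 (min h t)" for t :: real
  have c_in: "c t \<in> {0..h}" for t using h by (auto simp: c_def)
  have c_id: "t \<in> {0..h} \<Longrightarrow> c t = t" for t by (auto simp: c_def)
  have cc: "continuous_on UNIV c" unfolding c_def by (intro continuous_intros)
  have inbc: "(\<lambda>t. x0 + integral {0..c t} (\<lambda>u. F (z u))) \<in> bcontfun" if zc: "continuous_on UNIV z" for z
  proof -
    have gc: "continuous_on {0..h} (\<lambda>u. F (z u))"
      by (rule continuous_on_compose2[OF Fc continuous_on_subset[OF zc]]) auto
    define K where "K u = x0 + integral {0..u} (\<lambda>u. F (z u))" for u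
    have Kc: "continuous_on {0..h} K" unfolding K_def
      by (intro continuous_intros indefinite_integral_continuous_1 integrable_continuous_real gc)
    have "continuous_on UNIV (\<lambda>t. K (c t))"
      by (rule continuous_on_compose2[OF Kc cc]) (use c_in in auto)
    moreover have "bounded (range (\<lambda>t. K (c t)))"
    proof (rule bounded_subset)
      show "bounded (K ` {0..h})" by (intro compact_imp_bounded compact_continuous_image Kc compact_Icc)
      show "range (\<lambda>t. K (c t)) \<subseteq> K ` {0..h}" using c_in by auto
    qed
    ultimately show ?thesis unfolding bcontfun_def K_def by auto
  qed
  define Phi where "Phi x = Bcontfun (\<lambda>t. x0 + integral {0..c t} (\<lambda>u. F (apply_bcontfun x u)))"
    for x :: "(real, real^3) bcontfun"
  have Phi_ap: "apply_bcontfun (Phi x) t = x0 + integral {0..c t} (\<lambda>u. F (apply_bcontfun x u))" for x t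
    unfolding Phi_def by (subst Bcontfun_inverse[OF inbc]) auto
  define S where "S = {x :: (real, real^3) bcontfun. \<forall>t\<in>{0..h}. norm (apply_bcontfun x t - y t) \<le> \<delta>}"
  have evc: "continuous_on UNIV (\<lambda>x::(real, real^3) bcontfun. apply_bcontfun x t)" for t
    unfolding continuous_on_iff using dist_bounded le_less_trans by blast
  have Seq: "S = (\<Inter>t\<in>{0..h}. {x. norm (apply_bcontfun x t - y t) \<le> \<delta>})" by (auto simp: S_def)
  have "closed S" unfolding Seq
    by (intro closed_INT ballI closed_Collect_le continuous_on_norm continuous_on_diff evc continuous_on_const)
  hence cS: "complete S" using complete_eq_closed by blast
  have y0: "(\<lambda>t. y (c t)) \<in> bcontfun"
  proof -
    have "continuous_on UNIV (\<lambda>t. y (c t))"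
      by (rule continuous_on_compose2[OF yc cc]) (use c_in in auto)
    moreover have "bounded (range (\<lambda>t. y (c t)))"
    proof (rule bounded_subset)
      show "bounded (y ` {0..h})" by (intro compact_imp_bounded compact_continuous_image yc compact_Icc)
      show "range (\<lambda>t. y (c t)) \<subseteq> y ` {0..h}" using c_in by auto
    qed
    ultimately show ?thesis unfolding bcontfun_def by auto
  qed
  have "Bcontfun (\<lambda>t. y (c t)) \<in> S" unfolding S_def
    using d by (auto simp: Bcontfun_inverse[OF y0] c_id)
  hence Sne: "S \<noteq> {}" by blast
  have PS: "Phi ` S \<subseteq> S"
  proof
    fix w assume "w \<in> Phi ` S"
    then obtain x where x: "x \<in> S" "w = Phi x" by blast
    show "w \<in> S" unfolding S_def x(2)
    proof (intro CollectI ballI)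
      fix t assume t: "t \<in> {0..h}"
      have "norm (x0 + integral {0..t} (\<lambda>u. F (apply_bcontfun x u)) - y t) \<le> \<delta>"
        by (rule tube) (use x t in \<open>auto simp: S_def\<close>)
      thus "norm (apply_bcontfun (Phi x) t - y t) \<le> \<delta>" by (simp add: Phi_ap c_id[OF t])
    qed
  qed
  have contr: "dist (Phi x) (Phi z) \<le> (h * L) * dist x z" if x: "x \<in> S" and z: "z \<in> S" for x z
  proof (rule dist_bound)
    fix t
    have gc: "continuous_on {0..c t} (\<lambda>u. F (apply_bcontfun w u))" for w :: "(real, real^3) bcontfun"
      by (rule continuous_on_compose2[OF Fc]) auto
    have "dist (Phi x t) (Phi z t) = norm (integral {0..c t} (\<lambda>u. F (apply_bcontfun x u))
            - integral {0..c t} (\<lambda>u. F (apply_bcontfun z u)))"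
      by (simp add: Phi_ap dist_norm)
    also have "\<dots> = norm (integral {0..c t} (\<lambda>u. F (apply_bcontfun x u) - F (apply_bcontfun z u)))"
      by (subst integral_diff) (auto intro!: integrable_continuous_real gc)
    also have "\<dots> \<le> (L * dist x z) * (c t - 0)"
    proof (rule integral_bound)
      show "0 \<le> c t" using c_in by auto
      show "continuous_on {0..c t} (\<lambda>u. F (apply_bcontfun x u) - F (apply_bcontfun z u))"
        by (intro continuous_intros gc)
      fix u assume u: "u \<in> {0..c t}"
      hence u': "u \<in> {0..h}" using c_in[of t] by auto
      have "norm (F (apply_bcontfun x u) - F (apply_bcontfun z u)) \<le> L * norm (apply_bcontfun x u - apply_bcontfun z u)"
        by (rule lip[OF u' _ u']) (use x z u' in \<open>auto simp: S_def\<close>)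
      also have "\<dots> \<le> L * dist x z" using dist_bounded[of x u z] L(1)
        by (simp add: dist_norm mult_left_mono)
      finally show "norm (F (apply_bcontfun x u) - F (apply_bcontfun z u)) \<le> L * dist x z" .
    qed
    also have "\<dots> \<le> (L * dist x z) * h" using c_in[of t] L(1)
      by (intro mult_left_mono) auto
    finally show "dist (Phi x t) (Phi z t) \<le> h * L * dist x z" by (simp add: algebra_simps)
  qed
  obtain x where x: "x \<in> S" "Phi x = x"
    using Banach_fix[OF cS Sne _ L(2) PS contr] h L by auto
  define X where "X = apply_bcontfun x"
  have Xeq: "X t = x0 + integral {0..c t} (\<lambda>u. F (X u))" for t
    using Phi_ap[of x t] x(2) by (simp add: X_def)
  show ?thesis
  proof (intro exI conjI ballI)
    show "X 0 = x0" using Xeq[of 0] h by (simp add: c_def)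
    fix t assume t: "t \<in> {0..h}"
    show "norm (X t - y t) \<le> \<delta>" using x(1) t by (auto simp: S_def X_def)
    have gc: "continuous_on {0..h} (\<lambda>u. F (X u))"
      unfolding X_def by (rule continuous_on_compose2[OF Fc]) auto
    have "((\<lambda>u. x0 + integral {0..u} (\<lambda>u. F (X u))) has_vector_derivative F (X t)) (at t within {0..h})"
      using has_vector_derivative_add[OF has_vector_derivative_const integral_has_vector_derivative[OF gc t], of x0] by simp
    thus "(X has_vector_derivative F (X t)) (at t within {0..h})"
      by (rule has_vector_derivative_transform[OF t, rotated]) (metis Xeq c_id)
  qed
qed


lemma yderiv:
  fixes g g' :: "3 \<Rightarrow> real \<Rightarrow> real"
  assumes "\<And>i. (g i has_real_derivative g' i t) (at t within T)"
  shows "((\<lambda>t. \<chi> i. g i t) has_vector_derivative (\<chi> i. g' i t)) (at t within T)"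
proof -
  have e: "(\<lambda>t. \<chi> i. g i t) = (\<lambda>t. \<Sum>i\<in>UNIV. g i t *\<^sub>R axis i 1)"
    by (rule ext) (simp add: vec_eq_iff axis_def if_distrib cong: if_cong)
  have e2: "(\<chi> i. g' i t) = (\<Sum>i\<in>UNIV. g' i t *\<^sub>R axis i 1)"
    by (simp add: vec_eq_iff axis_def if_distrib cong: if_cong)
  show ?thesis unfolding e e2
    apply (rule has_vector_derivative_sum)
    using has_vector_derivative_scaleR[OF assms has_vector_derivative_const] by simp
qed

lemma lin_sum_bound:
  fixes w :: "real^3" and b :: "3 \<Rightarrow> real"
  shows "\<bar>\<Sum>j\<in>UNIV. b j * w $ j\<bar> \<le> (\<Sum>j\<in>UNIV. \<bar>b j\<bar>) * norm w"
proof -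
  have "\<bar>\<Sum>j\<in>UNIV. b j * w $ j\<bar> \<le> (\<Sum>j\<in>UNIV. \<bar>b j * w $ j\<bar>)" by (rule sum_abs)
  also have "\<dots> \<le> (\<Sum>j\<in>UNIV. \<bar>b j\<bar> * norm w)"
    by (intro sum_mono) (simp add: abs_mult mult_left_mono component_le_norm_cart)
  finally show ?thesis by (simp add: sum_distrib_right)
qed

definition B0 :: "real^3 \<Rightarrow> real^3 \<Rightarrow> real" where
  "B0 \<alpha> \<epsilon> = (\<Sum>i\<in>UNIV. \<Sum>j\<in>UNIV. \<bar>beta \<alpha> \<epsilon> i j\<bar>)"

lemma B0_nonneg: "0 \<le> B0 \<alpha> \<epsilon>" unfolding B0_def by (intro sum_nonneg) auto

lemma cf_nth: "cournot_field \<alpha> \<epsilon> f q $ i = q $ i * (f $ i + (\<Sum>j\<in>UNIV. beta \<alpha> \<epsilon> i j * q $ j))"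
  by (simp add: cournot_field_def)

lemma lipF:
  assumes a: "norm a \<le> R" and b: "norm b \<le> R"
  shows "norm (cournot_field \<alpha> \<epsilon> f a - cournot_field \<alpha> \<epsilon> f b)
           \<le> ((\<Sum>i\<in>UNIV. \<bar>f $ i\<bar>) + 2 * R * B0 \<alpha> \<epsilon>) * norm (a - b)"
proof -
  let ?F = "cournot_field \<alpha> \<epsilon> f"
  let ?d = "norm (a - b)"
  define Bi where "Bi i = (\<Sum>j\<in>UNIV. \<bar>beta \<alpha> \<epsilon> i j\<bar>)" for i
  have R0: "0 \<le> R" using a norm_ge_zero order_trans by blast
  have comp: "\<bar>(?F a - ?F b) $ i\<bar> \<le> (\<bar>f $ i\<bar> + 2 * R * Bi i) * ?d" for i
  proof -
    define Sa where "Sa = (\<Sum>j\<in>UNIV. beta \<alpha> \<epsilon> i j * a $ j)"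
    define Sb where "Sb = (\<Sum>j\<in>UNIV. beta \<alpha> \<epsilon> i j * b $ j)"
    have e: "(?F a - ?F b) $ i = f $ i * (a $ i - b $ i) + (a $ i - b $ i) * Sa + b $ i * (Sa - Sb)"
      by (simp add: cf_nth Sa_def Sb_def algebra_simps)
    have Sab: "Sa - Sb = (\<Sum>j\<in>UNIV. beta \<alpha> \<epsilon> i j * (a - b) $ j)"
      by (simp add: Sa_def Sb_def sum_subtractf[symmetric] algebra_simps)
    have h1: "\<bar>Sa\<bar> \<le> Bi i * R" unfolding Sa_def Bi_def
      by (rule order_trans[OF lin_sum_bound mult_left_mono[OF a]]) (auto intro: sum_nonneg)
    have h2: "\<bar>Sa - Sb\<bar> \<le> Bi i * ?d"
      using lin_sum_bound[of "beta \<alpha> \<epsilon> i" "a - b"] by (simp add: Sab Bi_def)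
    have di: "\<bar>a $ i - b $ i\<bar> \<le> ?d" using component_le_norm_cart[of "a - b" i] by simp
    have bi: "\<bar>b $ i\<bar> \<le> R" using component_le_norm_cart[of b i] b by simp
    have Bi0: "0 \<le> Bi i" unfolding Bi_def by (intro sum_nonneg) auto
    have "\<bar>(?F a - ?F b) $ i\<bar> \<le> \<bar>f $ i * (a $ i - b $ i)\<bar> + \<bar>(a $ i - b $ i) * Sa\<bar> + \<bar>b $ i * (Sa - Sb)\<bar>"
      unfolding e by (rule order_trans[OF abs_triangle_ineq add_mono[OF abs_triangle_ineq order_refl]])
    also have "\<dots> = \<bar>f $ i\<bar> * \<bar>a $ i - b $ i\<bar> + \<bar>a $ i - b $ i\<bar> * \<bar>Sa\<bar> + \<bar>b $ i\<bar> * \<bar>Sa - Sb\<bar>"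
      by (simp add: abs_mult)
    also have "\<dots> \<le> \<bar>f $ i\<bar> * ?d + ?d * (Bi i * R) + R * (Bi i * ?d)"
      by (intro add_mono mult_mono di h1 h2 bi) (auto simp: Bi0 R0)
    finally show ?thesis by (simp add: algebra_simps)
  qed
  have "norm (?F a - ?F b) \<le> (\<Sum>i\<in>UNIV. \<bar>(?F a - ?F b) $ i\<bar>)" by (rule norm_le_l1_cart)
  also have "\<dots> \<le> (\<Sum>i\<in>UNIV. (\<bar>f $ i\<bar> + 2 * R * Bi i) * ?d)" by (intro sum_mono comp)
  also have "\<dots> = ((\<Sum>i\<in>UNIV. \<bar>f $ i\<bar>) + 2 * R * B0 \<alpha> \<epsilon>) * ?d"
    by (simp add: B0_def Bi_def sum_distrib_right sum.distrib sum_distrib_left algebra_simps)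
  finally show ?thesis .
qed

lemma quadF:
  "norm (cournot_field \<alpha> \<epsilon> f a - (\<chi> i. f $ i * a $ i)) \<le> B0 \<alpha> \<epsilon> * norm a ^ 2"
proof -
  let ?F = "cournot_field \<alpha> \<epsilon> f"
  define Bi where "Bi i = (\<Sum>j\<in>UNIV. \<bar>beta \<alpha> \<epsilon> i j\<bar>)" for i
  have comp: "\<bar>(?F a - (\<chi> i. f $ i * a $ i)) $ i\<bar> \<le> Bi i * norm a ^ 2" for i
  proof -
    have e: "(?F a - (\<chi> i. f $ i * a $ i)) $ i = a $ i * (\<Sum>j\<in>UNIV. beta \<alpha> \<epsilon> i j * a $ j)"
      by (simp add: cf_nth algebra_simps)
    have Bi0: "0 \<le> Bi i" unfolding Bi_def by (intro sum_nonneg) auto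
    have "\<bar>a $ i * (\<Sum>j\<in>UNIV. beta \<alpha> \<epsilon> i j * a $ j)\<bar> \<le> norm a * (Bi i * norm a)"
      unfolding abs_mult
      by (intro mult_mono component_le_norm_cart) (use lin_sum_bound[of "beta \<alpha> \<epsilon> i" a] in \<open>auto simp: Bi_def\<close>)
    thus ?thesis unfolding e power2_eq_square by (simp add: mult_ac)
  qed
  have "norm (?F a - (\<chi> i. f $ i * a $ i)) \<le> (\<Sum>i\<in>UNIV. \<bar>(?F a - (\<chi> i. f $ i * a $ i)) $ i\<bar>)" by (rule norm_le_l1_cart)
  also have "\<dots> \<le> (\<Sum>i\<in>UNIV. Bi i * norm a ^ 2)" by (intro sum_mono comp)
  also have "\<dots> = B0 \<alpha> \<epsilon> * norm a ^ 2" by (simp add: B0_def Bi_def sum_distrib_right)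
  finally show ?thesis .
qed



definition Ey :: "real^3 \<Rightarrow> real^3 \<Rightarrow> real" where
  "Ey f v = (\<Sum>i\<in>UNIV. exp \<bar>f $ i\<bar> * \<bar>v $ i\<bar>)"

lemma ynorm:
  assumes "0 \<le> s" "t \<in> {0..1}"
  shows "norm (\<chi> i. s * (exp (f $ i * t) * v $ i)) \<le> s * Ey f v"
proof -
  have "norm (\<chi> i. s * (exp (f $ i * t) * v $ i)) \<le> (\<Sum>i\<in>UNIV. \<bar>(\<chi> i. s * (exp (f $ i * t) * v $ i)) $ i\<bar>)"
    by (rule norm_le_l1_cart)
  also have "\<dots> \<le> (\<Sum>i\<in>UNIV. s * (exp \<bar>f $ i\<bar> * \<bar>v $ i\<bar>))"
  proof (intro sum_mono)
    fix i :: 3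
    have "f $ i * t \<le> \<bar>f $ i\<bar> * t" by (rule mult_right_mono) (use assms(2) in auto)
    also have "\<dots> \<le> \<bar>f $ i\<bar>" by (rule mult_left_le) (use assms(2) in auto)
    finally have "f $ i * t \<le> \<bar>f $ i\<bar>" .
    hence "exp (f $ i * t) \<le> exp \<bar>f $ i\<bar>" by simp
    thus "\<bar>(\<chi> i. s * (exp (f $ i * t) * v $ i)) $ i\<bar> \<le> s * (exp \<bar>f $ i\<bar> * \<bar>v $ i\<bar>)"
      using assms(1) by (simp add: abs_mult mult_left_mono mult_right_mono)
  qed
  also have "\<dots> = s * Ey f v" by (simp add: Ey_def sum_distrib_left)
  finally show ?thesis .
qed

lemma Ey_nonneg: "0 \<le> Ey f v" unfolding Ey_def by (intro sum_nonneg) auto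

lemma exists_sol:
  fixes v :: "real^3"
  obtains h where "0 < h" "h \<le> 1"
    "\<And>s. 0 < s \<Longrightarrow> s \<le> 1 \<Longrightarrow> \<exists>x. x 0 = s *\<^sub>R v \<and> (\<forall>t\<in>{0..h}.
        (x has_vector_derivative cournot_field \<alpha> \<epsilon> f (x t)) (at t within {0..h})
        \<and> norm (x t - (\<chi> i. s * (exp (f $ i * t) * v $ i))) \<le> s\<^sup>2)"
proof -
  define F where "F = cournot_field \<alpha> \<epsilon> f"
  define E where "E = Ey f v"
  define B where "B = B0 \<alpha> \<epsilon>"
  define Lip where "Lip = (\<Sum>i\<in>UNIV. \<bar>f $ i\<bar>) + 2 * (E + 1) * B"
  define K where "K = Lip + B * E\<^sup>2"
  define h where "h = 1 / (2 * (K + 1))"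
  have E0: "0 \<le> E" unfolding E_def by (rule Ey_nonneg)
  have B0: "0 \<le> B" unfolding B_def by (rule B0_nonneg)
  have Lip0: "0 \<le> Lip" unfolding Lip_def using E0 B0 by (intro add_nonneg_nonneg mult_nonneg_nonneg sum_nonneg) auto
  have K0: "0 \<le> K" unfolding K_def using Lip0 B0 by simp
  have h0: "0 < h" unfolding h_def using K0 by simp
  have hK: "h * K \<le> 1/2" unfolding h_def using K0 by (simp add: field_simps)
  have h1: "h \<le> 1" unfolding h_def using K0 by (simp add: field_simps)
  have hL: "h * Lip < 1"
  proof -
    have "h * Lip \<le> h * K" unfolding K_def using h0 B0 by (intro mult_left_mono) auto
    thus ?thesis using hK by simp
  qed
  have Fc: "continuous_on UNIV F" unfolding F_def cournot_field_def by (intro continuous_intros)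
  show ?thesis
  proof (rule that[OF h0 h1])
    fix s :: real assume s0: "0 < s" and s1: "s \<le> 1"
    define y where "y t = (\<chi> i. s * (exp (f $ i * t) * v $ i))" for t
    have yd: "(y has_vector_derivative (\<chi> i. f $ i * y u $ i)) (at u within T)" for u T
    proof -
      have "(y has_vector_derivative (\<chi> i. s * (f $ i * exp (f $ i * u) * v $ i))) (at u within T)"
        unfolding y_def by (rule yderiv) (auto intro!: derivative_eq_intros)
      thus ?thesis by (simp add: y_def mult_ac)
    qed
    have yc: "continuous_on S y" for S
      using yd by (meson continuous_at_imp_continuous_on has_vector_derivative_continuous)
    have yn: "norm (y t) \<le> s * E" if "t \<in> {0..h}" for t
      unfolding y_def E_def by (rule ynorm) (use s0 that h1 in auto)
    have nrm: "norm a \<le> E + 1" if "t \<in> {0..h}" "norm (a - y t) \<le> s\<^sup>2" for a t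
    proof -
      have "norm a \<le> norm (y t) + norm (a - y t)" by (metis norm_triangle_sub add.commute)
      also have "\<dots> \<le> s * E + s\<^sup>2" using yn[OF that(1)] that(2) by simp
      also have "\<dots> \<le> E + 1" using s0 s1 E0
        by (intro add_mono mult_left_le_one_le power_le_one) auto
      finally show ?thesis .
    qed
    have "\<exists>x. x 0 = s *\<^sub>R v \<and> (\<forall>t\<in>{0..h}. (x has_vector_derivative F (x t)) (at t within {0..h})
                 \<and> norm (x t - y t) \<le> s\<^sup>2)"
    proof (rule picard[OF h0 _ yc Fc Lip0 hL])
      show "0 \<le> s\<^sup>2" by simp
      fix a b t t' assume "t \<in> {0..h}" "norm (a - y t) \<le> s\<^sup>2" "t' \<in> {0..h}" "norm (b - y t') \<le> s\<^sup>2"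
      thus "norm (F a - F b) \<le> Lip * norm (a - b)"
        unfolding F_def Lip_def B_def by (intro lipF nrm) auto
    next
      fix z t assume zc: "continuous_on {0..h} z" and zy: "\<forall>t\<in>{0..h}. norm (z t - y t) \<le> s\<^sup>2"
        and t: "t \<in> {0..h}"
      define Ly where "Ly u = (\<chi> i. f $ i * y u $ i)" for u
      have sub: "{0..t} \<subseteq> {0..h}" using t by auto
      have y0: "y 0 = s *\<^sub>R v" by (simp add: y_def vec_eq_iff)
      have i1: "(Ly has_integral (y t - y 0)) {0..t}"
        unfolding Ly_def by (rule fundamental_theorem_of_calculus) (use t yd in auto)
      have gc: "continuous_on {0..t} (\<lambda>u. F (z u))"
        by (rule continuous_on_compose2[OF Fc continuous_on_subset[OF zc sub]]) auto
      have i2: "((\<lambda>u. F (z u)) has_integral integral {0..t} (\<lambda>u. F (z u))) {0..t}"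
        by (intro integrable_integral integrable_continuous_real gc)
      have eq: "s *\<^sub>R v + integral {0..t} (\<lambda>u. F (z u)) - y t = integral {0..t} (\<lambda>u. F (z u) - Ly u)"
        using integral_unique[OF has_integral_diff[OF i2 i1]] y0 by (simp add: algebra_simps)
      have Lyc: "continuous_on {0..t} Ly" unfolding Ly_def by (intro continuous_intros yc)
      have "norm (integral {0..t} (\<lambda>u. F (z u) - Ly u)) \<le> (s\<^sup>2 * K) * (t - 0)"
      proof (rule integral_bound)
        show "0 \<le> t" using t by auto
        show "continuous_on {0..t} (\<lambda>u. F (z u) - Ly u)" by (intro continuous_intros gc Lyc)
        fix u assume u: "u \<in> {0..t}"
        hence u': "u \<in> {0..h}" using sub by auto
        have zu: "norm (z u - y u) \<le> s\<^sup>2" using zy u' by auto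
        have "norm (F (z u) - Ly u) \<le> norm (F (z u) - F (y u)) + norm (F (y u) - Ly u)"
          by (rule norm_diff_triangle_le[OF order_refl order_refl])
        also have "\<dots> \<le> Lip * norm (z u - y u) + B * (norm (y u))^2"
        proof (rule add_mono)
          show "norm (F (z u) - F (y u)) \<le> Lip * norm (z u - y u)"
            unfolding F_def Lip_def B_def by (intro lipF nrm[OF u'] zu) simp
          show "norm (F (y u) - Ly u) \<le> B * (norm (y u))^2"
            unfolding F_def Ly_def B_def by (rule quadF)
        qed
        also have "\<dots> \<le> Lip * s\<^sup>2 + B * (s * E)\<^sup>2"
          by (intro add_mono mult_left_mono power_mono zu yn[OF u'] Lip0 B0) auto
        also have "\<dots> = s\<^sup>2 * K" by (simp add: K_def power_mult_distrib algebra_simps)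
        finally show "norm (F (z u) - Ly u) \<le> s\<^sup>2 * K" .
      qed
      also have "\<dots> \<le> s\<^sup>2 * K * h" using t K0 by (intro mult_left_mono) auto
      also have "\<dots> = s\<^sup>2 * (h * K)" by (simp add: mult_ac)
      also have "\<dots> \<le> s\<^sup>2 * (1/2)" using hK by (intro mult_left_mono) auto
      also have "\<dots> \<le> s\<^sup>2" by simp
      finally show "norm (s *\<^sub>R v + integral {0..t} (\<lambda>u. F (z u)) - y t) \<le> s\<^sup>2" by (simp add: eq)
    qed
    thus "\<exists>x. x 0 = s *\<^sub>R v \<and> (\<forall>t\<in>{0..h}.
        (x has_vector_derivative cournot_field \<alpha> \<epsilon> f (x t)) (at t within {0..h})
        \<and> norm (x t - (\<chi> i. s * (exp (f $ i * t) * v $ i))) \<le> s\<^sup>2)"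
      by (simp add: F_def y_def)
  qed
qed



lemma has_sum_diff':
  fixes f g :: "'a \<Rightarrow> real"
  assumes "(f has_sum a) A" "(g has_sum b) A"
  shows "((\<lambda>x. f x - g x) has_sum (a - b)) A"
proof -
  have "((\<lambda>x. - g x) has_sum (- b)) A" using has_sum_uminus[of g A "- b"] assms(2) by simp
  from has_sum_add[OF assms(1) this] show ?thesis by simp
qed

definition mon :: "real^3 \<Rightarrow> nat \<times> nat \<times> nat \<Rightarrow> real" where
  "mon q n = q$1 ^ fst n * q$2 ^ fst (snd n) * q$3 ^ snd (snd n)"
definition deg :: "nat \<times> nat \<times> nat \<Rightarrow> nat" where
  "deg n = fst n + fst (snd n) + snd (snd n)"
definition Box :: "nat \<Rightarrow> (nat \<times> nat \<times> nat) set" where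
  "Box m = {..m} \<times> {..m} \<times> {..m}"
definition Pm :: "nat \<Rightarrow> (nat \<times> nat \<times> nat \<Rightarrow> real) \<Rightarrow> real^3 \<Rightarrow> real" where
  "Pm m a q = (\<Sum>n\<in>Box m. a n * mon q n)"

lemma finite_Box[simp]: "finite (Box m)" by (simp add: Box_def)

lemma mon_scale: "mon (s *\<^sub>R w) n = s ^ deg n * mon w n"
  by (simp add: mon_def deg_def power_mult_distrib power_add)

lemma mon_abs: "\<bar>mon q n\<bar> \<le> norm q ^ deg n"
proof -
  have "\<bar>mon q n\<bar> = \<bar>q$1\<bar> ^ fst n * \<bar>q$2\<bar> ^ fst (snd n) * \<bar>q$3\<bar> ^ snd (snd n)"
    by (simp add: mon_def abs_mult power_abs)
  also have "\<dots> \<le> norm q ^ fst n * norm q ^ fst (snd n) * norm q ^ snd (snd n)"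
    by (intro mult_mono power_mono component_le_norm_cart) auto
  also have "\<dots> = norm q ^ deg n" by (simp add: deg_def power_add)
  finally show ?thesis .
qed

lemma mon_zero[simp]: "mon q (0,0,0) = 1" by (simp add: mon_def)

lemma series_part:
  fixes I :: "real^3 \<Rightarrow> real" and c :: "nat \<Rightarrow> nat \<Rightarrow> nat \<Rightarrow> real"
  assumes r: "0 < r"
    and hs: "\<forall>q\<in>ball 0 r. ((\<lambda>(n1, n2, n3). c n1 n2 n3 * (q $ 1) ^ n1 * (q $ 2) ^ n2 * (q $ 3) ^ n3)
          has_sum I q) (UNIV :: (nat \<times> nat \<times> nat) set)"
    and nc: "\<not> (\<exists>k. \<forall>q\<in>ball 0 r. I q = k)"
  obtains m \<rho> a M where "0 < m" "0 < \<rho>" "\<rho> < r"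
    "\<And>n. a n = (if deg n = m then c (fst n) (fst (snd n)) (snd (snd n)) else 0)"
    "\<exists>n. deg n = m \<and> a n \<noteq> 0"
    "\<And>q. norm q \<le> \<rho> \<Longrightarrow> \<bar>I q - c 0 0 0 - Pm m a q\<bar> \<le> M * norm q ^ (m + 1)"
proof -
  define C where "C n = c (fst n) (fst (snd n)) (snd (snd n))" for n
  have hs': "((\<lambda>n. C n * mon q n) has_sum I q) UNIV" if "q \<in> ball 0 r" for q
  proof -
    have eqL: "(\<lambda>(n1, n2, n3). c n1 n2 n3 * (q $ 1) ^ n1 * (q $ 2) ^ n2 * (q $ 3) ^ n3) = (\<lambda>n. C n * mon q n)" (is "?L = ?R")
    proof (rule ext)
      fix n :: "nat \<times> nat \<times> nat"
      obtain n1 n2 n3 where "n = (n1, n2, n3)" by (cases n)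
      thus "?L n = ?R n" by (simp add: C_def mon_def mult.assoc)
    qed
    show ?thesis using bspec[OF hs that] unfolding eqL .
  qed
  have ex: "\<exists>n. n \<noteq> (0,0,0) \<and> C n \<noteq> 0"
  proof (rule ccontr)
    assume "\<not> ?thesis"
    hence z: "\<And>n. n \<noteq> (0,0,0) \<Longrightarrow> C n = 0" by blast
    have "\<forall>q\<in>ball 0 r. I q = C (0,0,0)"
    proof
      fix q :: "real^3" assume q: "q \<in> ball 0 r"
      have "((\<lambda>n. C n * mon q n) has_sum C (0,0,0)) UNIV"
        by (rule has_sum_finite_neutralI[of "{(0,0,0)}"]) (auto simp: z)
      thus "I q = C (0,0,0)" using hs'[OF q] has_sum_unique by blast
    qed
    thus False using nc by blast
  qed
  define P where "P k \<longleftrightarrow> 0 < k \<and> (\<exists>n. deg n = k \<and> C n \<noteq> 0)" for k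
  define m where "m = (LEAST k. P k)"
  obtain n0 where n0: "n0 \<noteq> (0,0,0)" "C n0 \<noteq> 0" using ex by blast
  have "0 < deg n0" using n0(1) by (cases n0) (auto simp: deg_def)
  hence Pn0: "P (deg n0)" using n0 unfolding P_def by blast
  have Pm_: "P m" unfolding m_def by (rule LeastI[of P, OF Pn0])
  have m0: "0 < m" using Pm_ by (simp add: P_def)
  have small: "C n = 0" if "0 < deg n" "deg n < m" for n
  proof -
    have "\<not> P (deg n)" using not_less_Least[of "deg n" P] that unfolding m_def[symmetric] by blast
    thus ?thesis using that unfolding P_def by blast
  qed
  define a where "a n = (if deg n = m then C n else 0)" for n
  have exa: "\<exists>n. deg n = m \<and> a n \<noteq> 0" using Pm_ by (auto simp: P_def a_def)
  define \<rho> where "\<rho> = r / 4"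
  have \<rho>0: "0 < \<rho>" using r by (simp add: \<rho>_def)
  have \<rho>r: "\<rho> < r" using r by (simp add: \<rho>_def)
  define p :: "real^3" where "p = (\<chi> i. \<rho>)"
  have "norm p \<le> (\<Sum>i\<in>UNIV. \<bar>p $ i\<bar>)" by (rule norm_le_l1_cart)
  also have "\<dots> = 3 * \<rho>" using \<rho>0 by (simp add: p_def sum_3)
  also have "\<dots> < r" using r by (simp add: \<rho>_def)
  finally have pb: "p \<in> ball 0 r" by simp
  have monp: "mon p n = \<rho> ^ deg n" for n by (simp add: mon_def p_def deg_def power_add)
  have "(\<lambda>n. C n * \<rho> ^ deg n) summable_on UNIV"
    using hs'[OF pb] unfolding monp by (auto simp: summable_on_def)
  hence "(\<lambda>n. \<bar>C n * \<rho> ^ deg n\<bar>) summable_on UNIV"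
    using summable_on_iff_abs_summable_on_real[of "\<lambda>n. C n * \<rho> ^ deg n" UNIV] by simp
  then obtain A where A: "((\<lambda>n. \<bar>C n\<bar> * \<rho> ^ deg n) has_sum A) UNIV"
    using \<rho>0 by (auto simp: summable_on_def abs_mult)
  define M where "M = A / \<rho> ^ (m + 1)"
  show ?thesis
  proof (rule that[OF m0 \<rho>0 \<rho>r _ _ ])
    show "\<And>n. a n = (if deg n = m then c (fst n) (fst (snd n)) (snd (snd n)) else 0)"
      by (simp add: a_def C_def)
    show "\<exists>n. deg n = m \<and> a n \<noteq> 0" by (rule exa)
    fix q :: "real^3" assume qn: "norm q \<le> \<rho>"
    hence qb: "q \<in> ball 0 r" using \<rho>r by simp
    define G where "G n = (if deg n \<le> m then C n * mon q n else 0)" for n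
    have Gsum: "(G has_sum (C (0,0,0) + Pm m a q)) UNIV"
    proof (rule has_sum_finite_neutralI[of "Box m"])
      show "finite (Box m)" by simp
      show "Box m \<subseteq> UNIV" by simp
      show "G n = 0" if "n \<in> UNIV - Box m" for n
        using that by (cases n) (auto simp: G_def Box_def deg_def)
      have "(\<Sum>n\<in>Box m. G n) = (\<Sum>n\<in>Box m. (if n = (0,0,0) then C (0,0,0) else 0) + a n * mon q n)"
      proof (rule sum.cong[OF refl])
        fix n assume "n \<in> Box m"
        show "G n = (if n = (0,0,0) then C (0,0,0) else 0) + a n * mon q n"
        proof (cases "n = (0,0,0)")
          case True thus ?thesis using m0 by (simp add: G_def a_def deg_def)
        next
          case False
          hence "0 < deg n" by (cases n) (auto simp: deg_def)
          thus ?thesis using False small[of n] by (auto simp: G_def a_def)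
        qed
      qed
      also have "\<dots> = C (0,0,0) + Pm m a q"
        by (simp add: sum.distrib Pm_def Box_def)
      finally show "C (0,0,0) + Pm m a q = (\<Sum>n\<in>Box m. G n)" by simp
    qed
    define H where "H n = (if m < deg n then C n * mon q n else 0)" for n
    have Hsum: "(H has_sum (I q - C (0,0,0) - Pm m a q)) UNIV"
    proof -
      have "((\<lambda>n. C n * mon q n - G n) has_sum (I q - (C (0,0,0) + Pm m a q))) UNIV"
        by (rule has_sum_diff'[OF hs'[OF qb] Gsum])
      moreover have "(\<lambda>n. C n * mon q n - G n) = H" by (rule ext) (auto simp: G_def H_def)
      ultimately show ?thesis by (simp add: algebra_simps)
    qed
    define \<theta> where "\<theta> = (norm q / \<rho>) ^ (m + 1)"
    have Bsum: "((\<lambda>n. \<bar>C n\<bar> * \<rho> ^ deg n * \<theta>) has_sum (A * \<theta>)) UNIV"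
      by (rule has_sum_cmult_left[OF A])
    have Hb: "\<bar>H n\<bar> \<le> \<bar>C n\<bar> * \<rho> ^ deg n * \<theta>" for n
    proof (cases "m < deg n")
      case True
      have r01: "0 \<le> norm q / \<rho>" "norm q / \<rho> \<le> 1" using qn \<rho>0 by auto
      have "\<bar>mon q n\<bar> \<le> norm q ^ deg n" by (rule mon_abs)
      also have "\<dots> = \<rho> ^ deg n * (norm q / \<rho>) ^ deg n" using \<rho>0 by (simp add: power_divide)
      also have "\<dots> \<le> \<rho> ^ deg n * \<theta>" unfolding \<theta>_def
        using True r01 \<rho>0 by (intro mult_left_mono power_decreasing) auto
      finally have "\<bar>mon q n\<bar> \<le> \<rho> ^ deg n * \<theta>" .
      thus ?thesis using True by (simp add: H_def abs_mult mult_left_mono mult.assoc)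
    next
      case False
      thus ?thesis using \<rho>0 by (simp add: H_def \<theta>_def)
    qed
    have u1: "I q - C (0,0,0) - Pm m a q \<le> A * \<theta>"
      by (rule has_sum_mono[OF Hsum Bsum]) (use Hb in \<open>auto simp: abs_le_iff\<close>)
    have "((\<lambda>n. - H n) has_sum (- (I q - C (0,0,0) - Pm m a q))) UNIV"
      using has_sum_uminus[of H] Hsum by simp
    hence u2: "- (I q - C (0,0,0) - Pm m a q) \<le> A * \<theta>"
      by (rule has_sum_mono[OF _ Bsum]) (use Hb in \<open>auto simp: abs_le_iff\<close>)
    have "A * \<theta> = M * norm q ^ (m + 1)" using \<rho>0 by (simp add: M_def \<theta>_def power_divide)
    thus "\<bar>I q - c 0 0 0 - Pm m a q\<bar> \<le> M * norm q ^ (m + 1)"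
      using u1 u2 by (simp add: C_def abs_le_iff)
  qed
qed



lemma box_nest:
  "(\<Sum>n\<in>Box m. b n * mon v n) =
   (\<Sum>i\<le>m. (\<Sum>j\<le>m. (\<Sum>k\<le>m. b (i,j,k) * v$3 ^ k) * v$2 ^ j) * v$1 ^ i)"
proof -
  have "(\<Sum>n\<in>Box m. b n * mon v n) = (\<Sum>i\<le>m. \<Sum>j\<le>m. \<Sum>k\<le>m. b (i,j,k) * mon v (i,j,k))"
    unfolding Box_def by (simp add: sum.cartesian_product)
  also have "\<dots> = (\<Sum>i\<le>m. \<Sum>j\<le>m. \<Sum>k\<le>m. b (i,j,k) * v$3 ^ k * v$2 ^ j * v$1 ^ i)"
    by (simp add: mon_def mult_ac)
  also have "\<dots> = (\<Sum>i\<le>m. (\<Sum>j\<le>m. (\<Sum>k\<le>m. b (i,j,k) * v$3 ^ k) * v$2 ^ j) * v$1 ^ i)"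
    by (simp only: sum_distrib_right)
  finally show ?thesis .
qed

lemma poly3_zero:
  assumes z: "\<And>v::real^3. (\<Sum>n\<in>Box m. b n * mon v n) = 0" and n: "n \<in> Box m"
  shows "b n = 0"
proof -
  have A: "\<forall>x. (\<Sum>i\<le>m. (\<Sum>j\<le>m. (\<Sum>k\<le>m. b (i,j,k) * z ^ k) * y ^ j) * x ^ i) = 0" for y z
  proof
    fix x :: real
    show "(\<Sum>i\<le>m. (\<Sum>j\<le>m. (\<Sum>k\<le>m. b (i,j,k) * z ^ k) * y ^ j) * x ^ i) = 0"
      using z[of "vector [x,y,z]"] by (simp add: box_nest)
  qed
  have B: "\<forall>y. (\<Sum>j\<le>m. (\<Sum>k\<le>m. b (i,j,k) * z ^ k) * y ^ j) = 0" if "i \<le> m" for i z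
  proof
    fix y show "(\<Sum>j\<le>m. (\<Sum>k\<le>m. b (i,j,k) * z ^ k) * y ^ j) = 0"
      using iffD1[OF polyfun_eq_0 A[where y=y and z=z]] that by simp
  qed
  have C: "\<forall>z. (\<Sum>k\<le>m. b (i,j,k) * z ^ k) = 0" if "i \<le> m" "j \<le> m" for i j
  proof
    fix z show "(\<Sum>k\<le>m. b (i,j,k) * z ^ k) = 0"
      using iffD1[OF polyfun_eq_0 B[OF that(1), where z=z]] that(2) by simp
  qed
  obtain i j k where ijk: "n = (i,j,k)" "i \<le> m" "j \<le> m" "k \<le> m" using n by (auto simp: Box_def)
  have "b (i,j,k) = 0" using iffD1[OF polyfun_eq_0 C[OF ijk(2,3)]] ijk(4) by simp
  thus ?thesis using ijk(1) by simp
qed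

definition dotf :: "real^3 \<Rightarrow> nat \<times> nat \<times> nat \<Rightarrow> real" where
  "dotf f n = real (fst n) * f$1 + real (fst (snd n)) * f$2 + real (snd (snd n)) * f$3"

lemma mon_exp: "mon (\<chi> i. exp (f$i * t) * v$i) n = exp (dotf f n * t) * mon v n"
proof -
  have "mon (\<chi> i. exp (f$i * t) * v$i) n =
     (exp (f$1 * t) ^ fst n * exp (f$2 * t) ^ fst (snd n) * exp (f$3 * t) ^ snd (snd n)) * mon v n"
    by (simp add: mon_def power_mult_distrib mult_ac)
  also have "exp (f$1 * t) ^ fst n * exp (f$2 * t) ^ fst (snd n) * exp (f$3 * t) ^ snd (snd n)
      = exp (dotf f n * t)"
    by (simp add: dotf_def exp_of_nat_mult[symmetric] exp_add[symmetric] algebra_simps)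
  finally show ?thesis .
qed

lemma deriv_zero:
  assumes h: "0 < h" and const: "\<forall>t\<in>{0..h}. Pm m a (\<chi> i. exp (f$i * t) * v$i) = Pm m a v"
  shows "(\<Sum>n\<in>Box m. (a n * dotf f n) * mon v n) = 0"
proof -
  define g where "g t = Pm m a (\<chi> i. exp (f$i * t) * v$i)" for t
  have geq: "g t = (\<Sum>n\<in>Box m. a n * (exp (dotf f n * t) * mon v n))" for t
    by (simp add: g_def Pm_def mon_exp)
  define D where "D = (\<Sum>n\<in>Box m. (a n * dotf f n) * mon v n)"
  have dn: "((\<lambda>t. a n * (exp (dotf f n * t) * mon v n)) has_field_derivative (a n * dotf f n) * mon v n) (at 0)" for n
  proof -
    have "((\<lambda>t. exp (dotf f n * t)) has_field_derivative dotf f n) (at 0)"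
      by (auto intro!: derivative_eq_intros)
    from DERIV_cmult[OF DERIV_cmult_right[OF this, of "mon v n"], of "a n"]
    show ?thesis by (simp add: mult_ac)
  qed
  have "(g has_field_derivative D) (at 0)"
    unfolding geq[abs_def] D_def by (rule DERIV_sum) (rule dn)
  hence "((\<lambda>y. (g y - g 0) / (y - 0)) \<longlongrightarrow> D) (at 0)"
    using has_field_derivative_iff by blast
  hence L1: "((\<lambda>y. (g y - g 0) / (y - 0)) \<longlongrightarrow> D) (at_right 0)"
    by (rule tendsto_mono[rotated]) (simp add: at_le)
  have ev: "eventually (\<lambda>y. (g y - g 0) / (y - 0) = 0) (at_right (0::real))"
    unfolding eventually_at_right_field
  proof (intro exI[of _ h] conjI allI impI)
    show "0 < h" by (rule h)
    fix y :: real assume "0 < y" "y < h"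
    hence "g y = Pm m a v" "g 0 = Pm m a v" using const h by (auto simp: g_def)
    thus "(g y - g 0) / (y - 0) = 0" by simp
  qed
  have L2: "((\<lambda>y. (g y - g 0) / (y - 0)) \<longlongrightarrow> 0) (at_right 0)"
    by (rule tendsto_eventually[OF ev])
  have "D = 0" by (rule tendsto_unique[OF trivial_limit_at_right_real L1 L2])
  thus ?thesis unfolding D_def .
qed



lemma Pm_scale:
  assumes aw: "\<And>n. deg n \<noteq> m \<Longrightarrow> a n = 0"
  shows "Pm m a (s *\<^sub>R w) = s ^ m * Pm m a w"
proof -
  have "Pm m a (s *\<^sub>R w) = (\<Sum>n\<in>Box m. s ^ m * (a n * mon w n))"
    unfolding Pm_def mon_scale
  proof (rule sum.cong[OF refl])
    fix n show "a n * (s ^ deg n * mon w n) = s ^ m * (a n * mon w n)"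
      using aw[of n] by (cases "deg n = m") auto
  qed
  thus ?thesis by (simp add: Pm_def sum_distrib_left)
qed

lemma Pm_cont: "isCont (Pm m a) x"
proof -
  have "continuous_on UNIV (Pm m a)" unfolding Pm_def[abs_def] mon_def by (intro continuous_intros)
  thus ?thesis by (simp add: continuous_on_eq_continuous_at)
qed

lemma invariance:
  fixes I :: "real^3 \<Rightarrow> real"
  assumes fi: "first_integral_on (cournot_field \<alpha> \<epsilon> f) I (ball 0 r)"
    and \<rho>: "0 < \<rho>" "\<rho> < r"
    and aw: "\<And>n. deg n \<noteq> m \<Longrightarrow> a n = 0"
    and J: "\<And>q. norm q \<le> \<rho> \<Longrightarrow> \<bar>I q - c0 - Pm m a q\<bar> \<le> M * norm q ^ (m + 1)"
  shows "\<exists>h>0. \<forall>t\<in>{0..h}. Pm m a (\<chi> i. exp (f$i * t) * v$i) = Pm m a v"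
proof -
  obtain h where h: "0 < h" "h \<le> 1" and sol: "\<And>s. 0 < s \<Longrightarrow> s \<le> 1 \<Longrightarrow> \<exists>x. x 0 = s *\<^sub>R v \<and> (\<forall>t\<in>{0..h}.
        (x has_vector_derivative cournot_field \<alpha> \<epsilon> f (x t)) (at t within {0..h})
        \<and> norm (x t - (\<chi> i. s * (exp (f $ i * t) * v $ i))) \<le> s\<^sup>2)"
    using exists_sol[of v \<alpha> \<epsilon> f] by blast
  have "\<forall>s. \<exists>x. 0 < s \<longrightarrow> s \<le> 1 \<longrightarrow> x 0 = s *\<^sub>R v \<and> (\<forall>t\<in>{0..h}.
        (x has_vector_derivative cournot_field \<alpha> \<epsilon> f (x t)) (at t within {0..h})
        \<and> norm (x t - (\<chi> i. s * (exp (f $ i * t) * v $ i))) \<le> s\<^sup>2)"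
    using sol by blast
  then obtain X where X: "\<And>s. 0 < s \<Longrightarrow> s \<le> 1 \<Longrightarrow> X s 0 = s *\<^sub>R v \<and> (\<forall>t\<in>{0..h}.
        (X s has_vector_derivative cournot_field \<alpha> \<epsilon> f (X s t)) (at t within {0..h})
        \<and> norm (X s t - (\<chi> i. s * (exp (f $ i * t) * v $ i))) \<le> s\<^sup>2)"
    using choice[of "\<lambda>s x. 0 < s \<longrightarrow> s \<le> 1 \<longrightarrow> x 0 = s *\<^sub>R v \<and> (\<forall>t\<in>{0..h}.
        (x has_vector_derivative cournot_field \<alpha> \<epsilon> f (x t)) (at t within {0..h})
        \<and> norm (x t - (\<chi> i. s * (exp (f $ i * t) * v $ i))) \<le> s\<^sup>2)"] by blast
  define E where "E = Ey f v"
  have E0: "0 \<le> E" unfolding E_def by (rule Ey_nonneg)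
  define M1 where "M1 = max M 0"
  have J1: "\<bar>I q - c0 - Pm m a q\<bar> \<le> M1 * norm q ^ (m + 1)" if "norm q \<le> \<rho>" for q
  proof -
    have "M * norm q ^ (m + 1) \<le> M1 * norm q ^ (m + 1)" by (rule mult_right_mono) (auto simp: M1_def)
    thus ?thesis using J[OF that] by linarith
  qed
  have M10: "0 \<le> M1" by (simp add: M1_def)
  define K where "K = M1 * (norm v ^ (m + 1) + (E + 1) ^ (m + 1))"
  define s0 where "s0 = min 1 (\<rho> / (E + norm v + 1))"
  have den: "0 < E + norm v + 1" using E0 norm_ge_zero[of v] by linarith
  hence s00: "0 < s0" using \<rho> by (simp add: s0_def divide_pos_pos)
  have sv: "s * (E + norm v + 1) < \<rho>" if "0 < s" "s < s0" for s
  proof -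
    have "s < \<rho> / (E + norm v + 1)" using that by (simp add: s0_def)
    thus ?thesis using den by (simp add: field_simps)
  qed
  have main: "\<forall>t\<in>{0..h}. Pm m a (\<chi> i. exp (f$i * t) * v$i) = Pm m a v"
  proof
    fix t assume t: "t \<in> {0..h}"
    define e where "e = (\<chi> i. exp (f$i * t) * v$i)"
    have ye: "(\<chi> i. s * (exp (f $ i * t) * v $ i)) = s *\<^sub>R e" for s by (simp add: e_def vec_eq_iff)
    define Z where "Z s = (1 / s) *\<^sub>R X s t" for s
    have ev1: "eventually (\<lambda>s. norm (Z s - e) \<le> s) (at_right 0)"
      unfolding eventually_at_right_field
    proof (intro exI[of _ s0] conjI allI impI)
      show "0 < s0" by (rule s00)
      fix s :: real assume s: "0 < s" "s < s0"
      hence s1: "s \<le> 1" by (simp add: s0_def)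
      have n: "norm (X s t - s *\<^sub>R e) \<le> s\<^sup>2" using X[OF s(1) s1] t unfolding ye[symmetric] by blast
      have "Z s - e = (1 / s) *\<^sub>R (X s t - s *\<^sub>R e)" using s by (simp add: Z_def algebra_simps)
      hence "norm (Z s - e) = norm (X s t - s *\<^sub>R e) / s" using s by simp
      also have "\<dots> \<le> s\<^sup>2 / s" using n s by (intro divide_right_mono) auto
      also have "\<dots> = s" using s by (simp add: power2_eq_square)
      finally show "norm (Z s - e) \<le> s" .
    qed
    have ev2: "eventually (\<lambda>s. norm (Pm m a (Z s) - Pm m a v) \<le> s * K) (at_right 0)"
      unfolding eventually_at_right_field
    proof (intro exI[of _ s0] conjI allI impI)
      show "0 < s0" by (rule s00)
      fix s :: real assume s: "0 < s" "s < s0"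
      hence s1: "s \<le> 1" by (simp add: s0_def)
      note Xs = X[OF s(1) s1]
      have "s * (E + 1) \<le> s * (E + norm v + 1)" "s * norm v \<le> s * (E + norm v + 1)"
        using s(1) E0 by (intro mult_left_mono; simp)+
      hence sb: "s * (E + 1) < \<rho>" "s * norm v < \<rho>" using sv[OF s] by linarith+
      have nX: "norm (X s t') \<le> s * (E + 1)" if t': "t' \<in> {0..h}" for t'
      proof -
        have "norm (X s t') \<le> norm (\<chi> i. s * (exp (f $ i * t') * v $ i)) + s\<^sup>2"
        proof -
          have "norm (X s t' - (\<chi> i. s * (exp (f $ i * t') * v $ i))) \<le> s\<^sup>2" using Xs t' by blast
          thus ?thesis using norm_triangle_sub[of "X s t'" "\<chi> i. s * (exp (f $ i * t') * v $ i)"] by linarith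
        qed
        also have "\<dots> \<le> s * E + s * 1"
          using ynorm[of s t' f v] t' h s s1 unfolding E_def
          by (intro add_mono) (auto simp: power2_eq_square mult_left_le)
        finally show ?thesis by (simp add: algebra_simps)
      qed
      have inball: "X s t' \<in> ball 0 r" if "t' \<in> {0..h}" for t'
        using nX[OF that] sb(1) \<rho>(2) by simp
      have fi2: "is_interval {0..h} \<longrightarrow> (\<forall>t\<in>{0..h}. X s t \<in> ball 0 r \<and>
                (X s has_vector_derivative cournot_field \<alpha> \<epsilon> f (X s t)) (at t within {0..h})) \<longrightarrow>
            (\<forall>s'\<in>{0..h}. \<forall>t\<in>{0..h}. I (X s s') = I (X s t))"
        using fi unfolding first_integral_on_def by blast
      have "\<forall>t\<in>{0..h}. X s t \<in> ball 0 r \<and>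
                (X s has_vector_derivative cournot_field \<alpha> \<epsilon> f (X s t)) (at t within {0..h})"
        using Xs inball by blast
      hence all: "\<forall>s'\<in>{0..h}. \<forall>t\<in>{0..h}. I (X s s') = I (X s t)" using fi2 is_interval_cc by blast
      have z0: "(0::real) \<in> {0..h}" using h by simp
      have "I (X s t) = I (X s 0)" using bspec[OF bspec[OF all t] z0] .
      hence Ieq: "I (X s t) = I (s *\<^sub>R v)" using Xs by simp
      have j1: "\<bar>I (X s t) - c0 - Pm m a (X s t)\<bar> \<le> M1 * (s * (E + 1)) ^ (m + 1)"
      proof -
        have "M1 * norm (X s t) ^ (m + 1) \<le> M1 * (s * (E + 1)) ^ (m + 1)"
          by (intro mult_left_mono power_mono nX[OF t] M10 norm_ge_zero)
        moreover have "norm (X s t) \<le> \<rho>" using nX[OF t] sb(1) by linarith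
        ultimately show ?thesis using J1[of "X s t"] by linarith
      qed
      have j2: "\<bar>I (s *\<^sub>R v) - c0 - Pm m a (s *\<^sub>R v)\<bar> \<le> M1 * (s * norm v) ^ (m + 1)"
        using J1[of "s *\<^sub>R v"] sb(2) s(1) by simp
      have Xeq: "X s t = s *\<^sub>R Z s" using s by (simp add: Z_def)
      have "s ^ m * \<bar>Pm m a (Z s) - Pm m a v\<bar> = \<bar>Pm m a (X s t) - Pm m a (s *\<^sub>R v)\<bar>"
      proof -
        have "\<bar>Pm m a (X s t) - Pm m a (s *\<^sub>R v)\<bar> = \<bar>s ^ m * (Pm m a (Z s) - Pm m a v)\<bar>"
          by (simp add: Xeq Pm_scale[OF aw] right_diff_distrib)
        also have "\<dots> = s ^ m * \<bar>Pm m a (Z s) - Pm m a v\<bar>" using s by (simp add: abs_mult)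
        finally show ?thesis by simp
      qed
      also have "\<dots> \<le> M1 * (s * (E + 1)) ^ (m + 1) + M1 * (s * norm v) ^ (m + 1)"
        using j1 j2 Ieq by linarith
      also have "\<dots> = s ^ m * (s * K)"
      proof -
        have p: "(s * x) ^ (m + 1) = s ^ m * (s * x ^ (m + 1))" for x
          by (simp only: power_mult_distrib) (simp add: mult_ac)
        show ?thesis unfolding p K_def by (simp add: algebra_simps)
      qed
      finally show "norm (Pm m a (Z s) - Pm m a v) \<le> s * K"
        using s by simp
    qed
    have id0: "((\<lambda>s::real. s) \<longlongrightarrow> 0) (at_right 0)" by (rule tendsto_ident_at)
    have "((\<lambda>s. Z s - e) \<longlongrightarrow> 0) (at_right 0)"
      by (rule Lim_null_comparison[OF ev1 id0])
    hence "(Z \<longlongrightarrow> e) (at_right 0)" by (rule LIM_zero_cancel)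
    hence L1: "((\<lambda>s. Pm m a (Z s)) \<longlongrightarrow> Pm m a e) (at_right 0)"
      by (rule isCont_tendsto_compose[OF Pm_cont])
    have "((\<lambda>s. s * K) \<longlongrightarrow> 0 * K) (at_right 0)" by (intro tendsto_mult id0 tendsto_const)
    hence "((\<lambda>s. Pm m a (Z s) - Pm m a v) \<longlongrightarrow> 0) (at_right 0)"
      by (intro Lim_null_comparison[OF ev2]) simp
    hence L2: "((\<lambda>s. Pm m a (Z s)) \<longlongrightarrow> Pm m a v) (at_right 0)" by (rule LIM_zero_cancel)
    show "Pm m a (\<chi> i. exp (f$i * t) * v$i) = Pm m a v"
      using tendsto_unique[OF trivial_limit_at_right_real L1 L2] by (simp add: e_def)
  qed
  show ?thesis using main h by blast
qed



theorem theorem2: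
  fixes \<alpha> \<epsilon> f :: "real^3"
  assumes "\<exists>(I :: real^3 \<Rightarrow> real) r. r > 0 \<and> analytic_on_ball0 I r
             \<and> first_integral_on (cournot_field \<alpha> \<epsilon> f) I (ball 0 r)
             \<and> \<not> (\<exists>k. \<forall>q\<in>ball 0 r. I q = k)"
  shows "\<exists>n1 n2 n3 :: nat. (n1, n2, n3) \<noteq> (0, 0, 0) \<and>
           real n1 * f $ 1 + real n2 * f $ 2 + real n3 * f $ 3 = 0"
proof -
  obtain I :: "real^3 \<Rightarrow> real" and r where r: "r > 0" and an: "analytic_on_ball0 I r"
    and fi: "first_integral_on (cournot_field \<alpha> \<epsilon> f) I (ball 0 r)"
    and nc: "\<not> (\<exists>k. \<forall>q\<in>ball 0 r. I q = k)"
    using assms by blast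
  obtain c :: "nat \<Rightarrow> nat \<Rightarrow> nat \<Rightarrow> real" where hs: "\<forall>q\<in>ball 0 r.
       ((\<lambda>(n1, n2, n3). c n1 n2 n3 * (q $ 1) ^ n1 * (q $ 2) ^ n2 * (q $ 3) ^ n3)
          has_sum I q) (UNIV :: (nat \<times> nat \<times> nat) set)"
    using an unfolding analytic_on_ball0_def by blast
  show ?thesis
  proof (rule series_part[OF r hs nc])
  fix m \<rho> a M assume m0: "0 < m" and \<rho>: "0 < \<rho>" "\<rho> < r"
    and adef: "\<And>n. a n = (if deg n = m then c (fst n) (fst (snd n)) (snd (snd n)) else 0)"
    and exa: "\<exists>n. deg n = m \<and> a n \<noteq> 0"
    and J: "\<And>q. norm q \<le> \<rho> \<Longrightarrow> \<bar>I q - c 0 0 0 - Pm m a q\<bar> \<le> M * norm q ^ (m + 1)"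
  have aw: "\<And>n. deg n \<noteq> m \<Longrightarrow> a n = 0" using adef by simp
  have D: "(\<Sum>n\<in>Box m. (a n * dotf f n) * mon v n) = 0" for v
  proof -
    obtain h where "h > 0" "\<forall>t\<in>{0..h}. Pm m a (\<chi> i. exp (f$i * t) * v$i) = Pm m a v"
      using invariance[OF fi \<rho> aw J] by blast
    thus ?thesis by (rule deriv_zero)
  qed
  obtain n where n: "deg n = m" "a n \<noteq> 0" using exa by blast
  obtain n1 n2 n3 where nn: "n = (n1, n2, n3)" by (cases n)
  have nB: "n \<in> Box m" using n(1) by (auto simp: nn Box_def deg_def)
  have "a n * dotf f n = 0" by (rule poly3_zero[OF D nB])
  hence "dotf f n = 0" using n(2) by simp
  moreover have "(n1, n2, n3) \<noteq> (0, 0, 0)" using n(1) m0 by (auto simp: nn deg_def)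
  ultimately show ?thesis by (auto simp: nn dotf_def)
  qed
qed


end
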